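(* Let $\alpha\ge2$, $k\ge2$ and $0\le t<\alpha$ be integers and $n=k\alpha+t$. Then $$\lambda_{n,\alpha}\le\begin{cases}k-1+\dfrac{2}{k-1}, & t=0,\\[2mm] k+\dfrac{2}{k}, & 1\le t<\alpha.\end{cases}$$
   Context: All graphs are finite and simple; $\lambda(G)$ is the spectral radius of the adjacency matrix of $G$. For integers $n\ge\alpha\ge1$, $\mathcal{G}_{n,\alpha}$ is the set of all connected graphs of order $n$ with independence number $\alpha$, and $\lambda_{n,\alpha}=\min\{\lambda(G):G\in\mathcal{G}_{n,\alpha}\}$. *)

theory Defs
  imports "Jordan_Normal_Form.Spectral_Radius"
begin

definition simple_graph :: "nat \<Rightarrow> nat set set \<Rightarrow> bool" where
  "simple_graph n E \<longleftrightarrow> (\<forall>e\<in>E. \<exists>u v. e = {u, v} \<and> u \<noteq> v \<and> u < n \<and> v < n)"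

definition adj_rel :: "nat set set \<Rightarrow> (nat \<times> nat) set" where
  "adj_rel E = {(u, v). {u, v} \<in> E}"

definition connected_graph :: "nat \<Rightarrow> nat set set \<Rightarrow> bool" where
  "connected_graph n E \<longleftrightarrow> (\<forall>u<n. \<forall>v<n. (u, v) \<in> (adj_rel E)\<^sup>*)"

definition independent_set :: "nat \<Rightarrow> nat set set \<Rightarrow> nat set \<Rightarrow> bool" where
  "independent_set n E S \<longleftrightarrow> S \<subseteq> {0..<n} \<and> (\<forall>u\<in>S. \<forall>v\<in>S. {u, v} \<notin> E)"

definition independence_number :: "nat \<Rightarrow> nat set set \<Rightarrow> nat" where
  "independence_number n E = Max (card ` {S. independent_set n E S})"

definition adjacency_matrix :: "nat \<Rightarrow> nat set set \<Rightarrow> complex mat" where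
  "adjacency_matrix n E = mat n n (\<lambda>(i, j). if {i, j} \<in> E then 1 else 0)"

definition graph_spectral_radius :: "nat \<Rightarrow> nat set set \<Rightarrow> real" where
  "graph_spectral_radius n E = spectral_radius (adjacency_matrix n E)"

definition graph_class :: "nat \<Rightarrow> nat \<Rightarrow> nat set set set" where
  "graph_class n \<alpha> = {E. simple_graph n E \<and> connected_graph n E \<and> independence_number n E = \<alpha>}"

definition lambda_min :: "nat \<Rightarrow> nat \<Rightarrow> real" where
  "lambda_min n \<alpha> = Min (graph_spectral_radius n ` graph_class n \<alpha>)"

end

theory Submission
  imports Defs
begin

lemma sr_bound:
  fixes A :: "complex mat" and a :: "nat \<Rightarrow> nat \<Rightarrow> real" and x :: "nat \<Rightarrow> real"
  assumes A: "A \<in> carrier_mat n n" and n: "n > 0"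
  and Aa: "\<And>i j. i<n \<Longrightarrow> j<n \<Longrightarrow> A $$ (i,j) = of_real (a i j)"
  and a0: "\<And>i j. i<n \<Longrightarrow> j<n \<Longrightarrow> a i j \<ge> 0"
  and x0: "\<And>i. i<n \<Longrightarrow> x i > 0"
  and row: "\<And>i. i<n \<Longrightarrow> (\<Sum>j<n. a i j * x j) \<le> c * x i"
  shows "spectral_radius A \<le> c"
proof -
  from spectral_radius_mem_max(1)[OF A n] obtain ev where ev: "ev \<in> spectrum A" and sr: "spectral_radius A = norm ev" by auto
  from ev obtain v where v: "v \<in> carrier_vec n" "v \<noteq> 0\<^sub>v n" "A *\<^sub>v v = ev \<cdot>\<^sub>v v"
    unfolding spectrum_def eigenvalue_def eigenvector_def using A by auto
  define r where "r j = norm (v $ j) / x j" for j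
  define M where "M = Max (r ` {0..<n})"
  have fin: "finite (r ` {0..<n})" by auto
  have ne: "r ` {0..<n} \<noteq> {}" using n by auto
  obtain i where i: "i < n" "r i = M" using Max_in[OF fin ne] unfolding M_def by auto
  have rle: "r j \<le> M" if "j<n" for j unfolding M_def using fin that by auto
  have "\<exists>j<n. v $ j \<noteq> 0"
  proof (rule ccontr)
    assume "\<not> ?thesis"
    hence "v = 0\<^sub>v n" using v(1) by (intro eq_vecI) auto
    thus False using v(2) by simp
  qed
  then obtain j where j: "j<n" "v$j \<noteq> 0" by auto
  have "r j > 0" using x0[OF j(1)] j by (auto simp: r_def)
  hence Mpos: "M > 0" using rle[OF j(1)] by auto
  have vi: "norm (v$i) = M * x i" using i x0[OF i(1)] by (auto simp: r_def field_simps)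
  have vj: "norm (v$j) \<le> M * x j" if "j<n" for j using rle[OF that] x0[OF that] by (auto simp: r_def field_simps)
  have e1: "(A *\<^sub>v v) $ i = (\<Sum>j<n. A$$(i,j) * v$j)" using A v(1) i by (auto simp: scalar_prod_def lessThan_atLeast0)
  have e2: "(ev \<cdot>\<^sub>v v) $ i = ev * v$i" using v(1) i by simp
  have eq: "ev * v$i = (\<Sum>j<n. A$$(i,j) * v$j)" using e1 e2 v(3) by simp
  have "norm ev * norm (v$i) = norm (\<Sum>j<n. A$$(i,j)*v$j)" by (simp add: eq norm_mult[symmetric])
  also have "\<dots> \<le> (\<Sum>j<n. norm (A$$(i,j)*v$j))" by (rule norm_sum)
  also have "\<dots> = (\<Sum>j<n. a i j * norm (v$j))" using Aa a0 i by (intro sum.cong) (auto simp: norm_mult)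
  also have "\<dots> \<le> (\<Sum>j<n. a i j * (M * x j))" by (intro sum_mono mult_left_mono vj a0 i) auto
  also have "\<dots> = M * (\<Sum>j<n. a i j * x j)" by (simp add: sum_distrib_left mult_ac)
  also have "\<dots> \<le> M * (c * x i)" using row[OF i(1)] Mpos by simp
  finally have "norm ev * (M * x i) \<le> c * (M * x i)" using vi by (simp add: mult_ac)
  thus ?thesis using sr Mpos x0[OF i(1)] by simp
qed

definition blk :: "nat \<Rightarrow> nat \<Rightarrow> nat \<Rightarrow> nat" where
  "blk k t v = (if v < t*(k+1) then v div (k+1) else t + (v - t*(k+1)) div k)"
definition fs :: "nat \<Rightarrow> nat \<Rightarrow> nat \<Rightarrow> nat" where
  "fs k t i = i*k + min i t"

lemma fs_Suc: "fs k t (Suc i) = fs k t i + k + (if i < t then 1 else 0)"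
  by (auto simp: fs_def)

lemma fs_mono: "i \<le> j \<Longrightarrow> fs k t i \<le> fs k t j"
  by (induct j rule: dec_induct) (auto simp: fs_Suc)

lemma fs_less: "i < j \<Longrightarrow> fs k t i + k \<le> fs k t j"
  using fs_mono[of "Suc i" j k t] fs_Suc[of k t i] by auto

lemma fs_blk: assumes "k \<ge> 1" shows "fs k t (blk k t j) \<le> j \<and> j < fs k t (Suc (blk k t j))"
proof (cases "j < t*(k+1)")
  case True
  define q where "q = j div (k+1)"
  have q: "blk k t j = q" using True by (simp add: blk_def q_def)
  have qt: "q < t" using True unfolding q_def by (simp add: div_less_iff_less_mult)
  have "q*(k+1) \<le> j" unfolding q_def using div_times_less_eq_dividend[of j "k+1"] by simp
  moreover have "j < (q+1)*(k+1)" unfolding q_def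
    using dividend_less_div_times[of "k+1" j] by (simp add: algebra_simps)
  ultimately show ?thesis using qt by (simp add: q fs_def algebra_simps)
next
  case False
  define r where "r = j - t*(k+1)"
  define q where "q = r div k"
  have q: "blk k t j = t + q" using False by (simp add: blk_def q_def r_def)
  have "q*k \<le> r" unfolding q_def by simp
  moreover have "r < (q+1)*k" unfolding q_def using assms
    using dividend_less_div_times[of k r] by (simp add: algebra_simps)
  ultimately show ?thesis using False unfolding q fs_def r_def by (simp add: algebra_simps, arith)
qed

lemma blk_eq: assumes "k \<ge> 1" shows "blk k t j = i \<longleftrightarrow> fs k t i \<le> j \<and> j < fs k t (Suc i)"
proof
  assume "blk k t j = i" thus "fs k t i \<le> j \<and> j < fs k t (Suc i)" using fs_blk[OF assms] by auto
next
  assume h: "fs k t i \<le> j \<and> j < fs k t (Suc i)"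
  have b: "fs k t (blk k t j) \<le> j \<and> j < fs k t (Suc (blk k t j))" using fs_blk[OF assms] .
  show "blk k t j = i"
  proof (rule ccontr)
    assume "blk k t j \<noteq> i"
    hence "blk k t j < i \<or> i < blk k t j" by auto
    thus False
    proof
      assume "blk k t j < i" hence "Suc (blk k t j) \<le> i" by auto
      from fs_mono[OF this, of k t] h b show False by auto
    next
      assume "i < blk k t j" hence "Suc i \<le> blk k t j" by auto
      from fs_mono[OF this, of k t] h b show False by auto
    qed
  qed
qed


definition R :: "nat \<Rightarrow> nat \<Rightarrow> nat \<Rightarrow> nat \<Rightarrow> bool" where
  "R k t u v = (blk k t u = blk k t v \<or> Suc u = v \<or> Suc v = u)"

definition GE :: "nat \<Rightarrow> nat \<Rightarrow> nat \<Rightarrow> nat set set" where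
  "GE k t n = {{u,v} | u v. u<n \<and> v<n \<and> u\<noteq>v \<and> R k t u v}"

lemma R_sym: "R k t u v = R k t v u" by (auto simp: R_def)

lemma memE: "{i,j} \<in> GE k t n \<longleftrightarrow> i<n \<and> j<n \<and> i\<noteq>j \<and> R k t i j"
  unfolding GE_def by (auto simp: doubleton_eq_iff R_sym)

lemma simpleE: "simple_graph n (GE k t n)"
  unfolding simple_graph_def GE_def by auto

lemma connE: "connected_graph n (GE k t n)"
proof -
  have step: "(j, Suc j) \<in> adj_rel (GE k t n)" "(Suc j, j) \<in> adj_rel (GE k t n)" if "Suc j < n" for j
    using that by (auto simp: adj_rel_def memE R_def)
  have path: "\<forall>j. j + d < n \<longrightarrow> (j, j+d) \<in> (adj_rel (GE k t n))\<^sup>* \<and> (j+d, j) \<in> (adj_rel (GE k t n))\<^sup>*" for d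
  proof (induct d)
    case 0 then show ?case by auto
  next
    case (Suc d)
    show ?case
    proof (intro allI impI)
      fix j assume h: "j + Suc d < n"
      hence "(j, j+d) \<in> (adj_rel (GE k t n))\<^sup>*" "(j+d, j) \<in> (adj_rel (GE k t n))\<^sup>*" using Suc by auto
      moreover have "(j+d, Suc (j+d)) \<in> adj_rel (GE k t n)" "(Suc (j+d), j+d) \<in> adj_rel (GE k t n)"
        using step[of "j+d"] h by auto
      ultimately show "(j, j + Suc d) \<in> (adj_rel (GE k t n))\<^sup>* \<and> (j + Suc d, j) \<in> (adj_rel (GE k t n))\<^sup>*"
        by (auto intro: rtrancl_into_rtrancl converse_rtrancl_into_rtrancl)
    qed
  qed
  show ?thesis unfolding connected_graph_def
  proof (intro allI impI)
    fix u v assume "u < n" "v < n"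
    show "(u, v) \<in> (adj_rel (GE k t n))\<^sup>*"
    proof (cases "u \<le> v")
      case True
      with \<open>v<n\<close> spec[OF path[of "v-u"], of u] show ?thesis by auto
    next
      case False with \<open>u<n\<close> spec[OF path[of "u-v"], of v] show ?thesis by auto
    qed
  qed
qed


context
  fixes k t \<alpha> n :: nat
  assumes k2: "k \<ge> 2" and a2: "\<alpha> \<ge> 2" and ta: "t < \<alpha>" and nd: "n = k*\<alpha> + t"
begin

lemma fs_alpha: "fs k t \<alpha> = n" using ta nd by (simp add: fs_def)

lemma blk_lt: assumes "v < n" shows "blk k t v < \<alpha>"
proof (rule ccontr)
  assume "\<not> ?thesis"
  hence "fs k t \<alpha> \<le> fs k t (blk k t v)" by (intro fs_mono) auto
  moreover have "fs k t (blk k t v) \<le> v" using fs_blk[of k t v] k2 by auto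
  ultimately show False using assms fs_alpha by auto
qed

lemma blk_fs: "blk k t (fs k t i) = i"
  using blk_eq[of k t "fs k t i" i] k2 fs_less[of i "Suc i" k t] by auto

lemma indep_le: assumes "independent_set n (GE k t n) S" shows "card S \<le> \<alpha>"
proof -
  have S: "S \<subseteq> {0..<n}" and ind: "\<And>u v. u\<in>S \<Longrightarrow> v\<in>S \<Longrightarrow> {u,v} \<notin> GE k t n"
    using assms by (auto simp: independent_set_def)
  have inj: "inj_on (blk k t) S"
  proof (rule inj_onI)
    fix u v assume "u \<in> S" "v \<in> S" "blk k t u = blk k t v"
    thus "u = v" using ind[of u v] S by (auto simp: memE R_def)
  qed
  have "blk k t ` S \<subseteq> {..<\<alpha>}" using S blk_lt by auto
  hence "card (blk k t ` S) \<le> \<alpha>" using card_mono[of "{..<\<alpha>}"] by fastforce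
  thus ?thesis using card_image[OF inj] by simp
qed

lemma indep_ex: "independent_set n (GE k t n) (fs k t ` {..<\<alpha>})"
  unfolding independent_set_def
proof (intro conjI ballI)
  show "fs k t ` {..<\<alpha>} \<subseteq> {0..<n}"
  proof
    fix u assume "u \<in> fs k t ` {..<\<alpha>}"
    then obtain i where "i < \<alpha>" "u = fs k t i" by auto
    thus "u \<in> {0..<n}" using fs_less[of i \<alpha> k t] fs_alpha k2 by auto
  qed
next
  fix u v assume "u \<in> fs k t ` {..<\<alpha>}" "v \<in> fs k t ` {..<\<alpha>}"
  then obtain i j where ij: "u = fs k t i" "v = fs k t j" by auto
  show "{u, v} \<notin> GE k t n"
  proof (cases "i = j")
    case True thus ?thesis using ij memE[of u u k t n] by simp
  next
    case False
    hence "i < j \<or> j < i" by auto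
    hence "Suc u \<noteq> v \<and> Suc v \<noteq> u" using fs_less[of i j k t] fs_less[of j i k t] k2 ij by auto
    moreover have "blk k t u \<noteq> blk k t v" using ij blk_fs False by auto
    ultimately show ?thesis by (auto simp: memE R_def)
  qed
qed

lemma indep_num: "independence_number n (GE k t n) = \<alpha>"
proof -
  have fin: "finite {S. independent_set n (GE k t n) S}"
    by (rule finite_subset[of _ "Pow {0..<n}"]) (auto simp: independent_set_def)
  have inj: "inj_on (fs k t) {..<\<alpha>}"
    by (rule inj_onI) (metis blk_fs)
  have "card (fs k t ` {..<\<alpha>}) = \<alpha>" using card_image[OF inj] by simp
  hence mem: "\<alpha> \<in> card ` {S. independent_set n (GE k t n) S}" using indep_ex by force
  show ?thesis unfolding independence_number_def
    by (rule Max_eqI) (use fin mem indep_le in auto)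
qed


definition mm :: real where "mm = real k + (if t = 0 then 0 else 1)"
definition xw :: "nat \<Rightarrow> real" where
  "xw j = (if j = fs k t (blk k t j) \<or> Suc j = fs k t (Suc (blk k t j)) then mm else mm - 1)"
definition aa :: "nat \<Rightarrow> nat \<Rightarrow> real" where
  "aa u w = (if {u,w} \<in> GE k t n then 1 else 0)"

lemma aa_eq: "aa u w = (if {u,w} \<in> GE k t n then 1 else 0)" by (simp add: aa_def)
lemma mm_eq: "mm = real k + (if t = 0 then 0 else 1)" by (simp add: mm_def)

lemma mm2: "mm \<ge> 2" using k2 by (auto simp: mm_def)
lemma xw_le: "xw j \<le> mm" by (auto simp: xw_def)
lemma xw_pos: "xw j > 0" using mm2 by (auto simp: xw_def)

lemma blk_size: assumes "i < \<alpha>"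
  shows "2 \<le> fs k t (Suc i) - fs k t i" "real (fs k t (Suc i) - fs k t i) \<le> mm"
  using assms k2 by (auto simp: fs_Suc mm_def)

lemma block_sum: assumes "i < \<alpha>"
  shows "(\<Sum>j\<in>{fs k t i..<fs k t (Suc i)}. xw j) \<le> (mm - 1) * real (fs k t (Suc i) - fs k t i) + 2"
proof -
  define a where "a = fs k t i"
  define b where "b = fs k t (Suc i)"
  have ab: "a + 2 \<le> b" using blk_size[OF assms] unfolding a_def b_def by auto
  have "xw j \<le> (mm - 1) + (if j = a then 1 else 0) + (if j = b - 1 then 1 else 0)" if "j \<in> {a..<b}" for j
  proof -
    have "blk k t j = i" using that blk_eq[of k t j i] k2 unfolding a_def b_def by auto
    thus ?thesis unfolding xw_def a_def b_def by auto
  qed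
  hence "(\<Sum>j\<in>{a..<b}. xw j) \<le> (\<Sum>j\<in>{a..<b}. (mm - 1) + (if j = a then 1 else 0) + (if j = b - 1 then 1 else 0))"
    by (rule sum_mono)
  also have "\<dots> = (mm - 1) * real (b - a) + 2" using ab by (simp add: sum.distrib)
  finally show ?thesis unfolding a_def b_def .
qed

lemma row_bound: assumes v: "v < n"
  shows "(\<Sum>j<n. aa v j * xw j) \<le> (mm - 1 + 2 / (mm - 1)) * xw v"
proof -
  define i where "i = blk k t v"
  define a where "a = fs k t i"
  define b where "b = fs k t (Suc i)"
  have ia: "i < \<alpha>" using blk_lt[OF v] unfolding i_def .
  have av: "a \<le> v" "v < b" using fs_blk[of k t v] k2 unfolding a_def b_def i_def by auto
  have bn: "b \<le> n" using fs_mono[of "Suc i" \<alpha> k t] ia fs_alpha unfolding b_def by auto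
  have inb: "blk k t j = i \<longleftrightarrow> a \<le> j \<and> j < b" for j using blk_eq[of k t j i] k2 unfolding a_def b_def by auto
  have xv: "xw v = (if v = a \<or> Suc v = b then mm else mm - 1)" unfolding xw_def a_def b_def i_def by simp
  define g1 where "g1 j = (if j \<in> {a..<b} then xw j else 0)" for j
  define g4 where "g4 j = (if j = v then xw v else 0)" for j
  define g2 where "g2 j = (if j = Suc v then (if Suc v = b then mm else 0) else 0)" for j
  define g3 where "g3 j = (if j = v - 1 then (if v = a \<and> v > 0 then mm else 0) else 0)" for j
  have g23: "g2 j \<ge> 0" "g3 j \<ge> 0" for j using mm2 by (auto simp: g2_def g3_def)
  have axle: "aa v j * xw j \<le> xw j" for j using xw_pos[of j] by (auto simp: aa_def)
  have pw: "aa v j * xw j \<le> g1 j - g4 j + g2 j + g3 j" if j: "j < n" for j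
  proof (cases "j = v")
    case True thus ?thesis using memE[of v v k t n] mm2 by (simp add: aa_def g1_def g4_def g2_def g3_def av)
  next
    case False
    note ne = False
    show ?thesis
    proof (cases "a \<le> j \<and> j < b")
      case True
      hence "g1 j = xw j" "g4 j = 0" using ne by (auto simp: g1_def g4_def)
      thus ?thesis using g23[of j] axle[of j] by linarith
    next
      case False
      hence nb: "blk k t j \<noteq> blk k t v" using inb[of j] inb[of v] av by auto
      show ?thesis
      proof (cases "{v, j} \<in> GE k t n")
        case True
        hence "Suc v = j \<or> Suc j = v" using nb by (auto simp: memE R_def)
        thus ?thesis
        proof
          assume "Suc v = j" hence "Suc v = b" using False av by auto
          hence "g2 j = mm" "g1 j = 0" "g4 j = 0" using \<open>Suc v = j\<close> ne False by (auto simp: g1_def g2_def g4_def)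
          thus ?thesis using g23[of j] axle[of j] xw_le[of j] by linarith
        next
          assume "Suc j = v" hence "v = a" using False av by auto
          hence "g3 j = mm" "g1 j = 0" "g4 j = 0" using \<open>Suc j = v\<close> ne False by (auto simp: g1_def g3_def g4_def)
          thus ?thesis using g23[of j] axle[of j] xw_le[of j] by linarith
        qed
      next
        case False
        hence "aa v j = 0" by (simp add: aa_def)
        moreover have "g1 j \<ge> 0" using xw_pos[of j] by (simp add: g1_def)
        moreover have "g4 j = 0" using ne by (simp add: g4_def)
        ultimately show ?thesis using g23[of j] by simp
      qed
    qed
  qed
  have "(\<Sum>j<n. aa v j * xw j) \<le> (\<Sum>j<n. g1 j - g4 j + g2 j + g3 j)" by (rule sum_mono) (use pw in auto)
  also have "\<dots> = (\<Sum>j<n. g1 j) - (\<Sum>j<n. g4 j) + (\<Sum>j<n. g2 j) + (\<Sum>j<n. g3 j)"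
    by (simp add: sum.distrib sum_subtractf)
  also have "(\<Sum>j<n. g1 j) = (\<Sum>j\<in>{a..<b}. xw j)"
  proof -
    have "(\<Sum>j<n. g1 j) = (\<Sum>j\<in>{..<n} \<inter> {a..<b}. xw j)" unfolding g1_def by (simp add: sum.inter_restrict)
    also have "{..<n} \<inter> {a..<b} = {a..<b}" using bn by auto
    finally show ?thesis .
  qed
  also have "(\<Sum>j<n. g4 j) = xw v" using v unfolding g4_def by simp
  also have "(\<Sum>j<n. g2 j) \<le> (if Suc v = b then mm else 0)" unfolding g2_def using mm2 by simp
  also have "(\<Sum>j<n. g3 j) \<le> (if v = a \<and> v > 0 then mm else 0)" unfolding g3_def using mm2 by simp
  finally have tot: "(\<Sum>j<n. aa v j * xw j) \<le> (\<Sum>j\<in>{a..<b}. xw j) - xw v + (if Suc v = b then mm else 0) + (if v = a \<and> v > 0 then mm else 0)"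
    by simp
  have bs: "(\<Sum>j\<in>{a..<b}. xw j) \<le> (mm - 1) * real (b - a) + 2" using block_sum[OF ia] unfolding a_def b_def .
  have s2: "2 \<le> b - a" and sm: "real (b - a) \<le> mm" using blk_size[OF ia] unfolding a_def b_def by auto
  have m1: "mm - 1 \<ge> 1" using mm2 by simp
  have prod: "(mm - 1) * real (b - a) \<le> (mm - 1) * mm" using sm m1 by (intro mult_left_mono) auto
  show ?thesis
  proof (cases "v = a \<or> Suc v = b")
    case True
    have excl: "\<not> (v = a \<and> Suc v = b)" using s2 by auto
    have e: "(if Suc v = b then mm else 0) + (if v = a \<and> v > 0 then mm else 0) \<le> mm" using excl mm2 by auto
    have "xw v = mm" using True xv by simp
    hence "(\<Sum>j<n. aa v j * xw j) \<le> (mm - 1) * mm + 2" using tot bs prod e by linarith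
    also have "\<dots> \<le> (mm - 1 + 2 / (mm - 1)) * mm"
    proof -
      have "2 \<le> 2 * mm / (mm - 1)" using m1 by (simp add: field_simps)
      thus ?thesis by (simp add: algebra_simps)
    qed
    finally show ?thesis using True xv by simp
  next
    case False
    have "xw v = mm - 1" using False xv by simp
    hence "(\<Sum>j<n. aa v j * xw j) \<le> (mm - 1) * mm + 2 - (mm - 1)" using tot bs prod False by simp
    also have "\<dots> = (mm - 1 + 2 / (mm - 1)) * (mm - 1)" using m1 by (simp add: field_simps)
    finally show ?thesis using False xv by simp
  qed
qed

end


theorem lemma2p2:
  fixes \<alpha> k t n :: nat
  assumes "\<alpha> \<ge> 2" and "k \<ge> 2" and "t < \<alpha>" and "n = k * \<alpha> + t"
  shows "lambda_min n \<alpha> \<le>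
    (if t = 0 then real k - 1 + 2 / (real k - 1) else real k + 2 / real k)"
proof -
  note ctx = assms(2) assms(1) assms(3) assms(4)
  define E where "E = GE k t n"
  have cls: "E \<in> graph_class n \<alpha>" unfolding graph_class_def E_def
    using simpleE connE indep_num[OF ctx] by auto
  have fin: "finite (graph_class n \<alpha>)"
    by (rule finite_subset[of _ "Pow (Pow {0..<n})"]) (auto simp: graph_class_def simple_graph_def)
  have l1: "lambda_min n \<alpha> \<le> graph_spectral_radius n E"
    unfolding lambda_min_def using fin cls by (auto intro: Min_le)
  have l2: "graph_spectral_radius n E \<le> mm k t - 1 + 2 / (mm k t - 1)"
    unfolding graph_spectral_radius_def
  proof (rule sr_bound[where a = "aa k t n" and x = "xw k t"])
    show "adjacency_matrix n E \<in> carrier_mat n n" by (simp add: adjacency_matrix_def)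
    show "n > 0" using assms by simp
    show "adjacency_matrix n E $$ (i, j) = complex_of_real (aa k t n i j)" if "i < n" "j < n" for i j
      using that by (simp add: adjacency_matrix_def aa_eq[OF ctx] E_def)
    show "aa k t n i j \<ge> 0" for i j by (simp add: aa_eq[OF ctx])
    show "xw k t i > 0" for i using xw_pos[OF ctx] .
    show "(\<Sum>j<n. aa k t n i j * xw k t j) \<le> (mm k t - 1 + 2 / (mm k t - 1)) * xw k t i" if "i < n" for i
      using row_bound[OF ctx that] .
  qed
  have l3: "mm k t - 1 + 2 / (mm k t - 1) = (if t = 0 then real k - 1 + 2 / (real k - 1) else real k + 2 / real k)"
    by (simp add: mm_eq[OF ctx])
  show ?thesis using l1 l2 l3 by simp
qed

end
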